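(* Let $\mathcal M=(G,In,Out,Leak)$ be a linear compartmental model with $n$ compartments and compartmental matrix $A$, and let $q,r$ be compartments. Write $$\det\big((\lambda I-A)^{r,q}\big)=c_{n-1}\lambda^{n-1}+c_{n-2}\lambda^{n-2}+\dots+c_0.$$ Then $$c_k=(-1)^{q+r}\sum_{F\in\mathcal F^{r,q}_{n-k-1}(\widetilde G^*_q)}\pi_F\qquad\text{for }k=0,1,\dots,n-1.$$
   Context: A linear compartmental model $\mathcal M=(G,In,Out,Leak)$ consists of a finite directed graph $G=(V_G,E_G)$ without multi-edges, compartments $V_G=\{1,\dots,n\}$, and subsets $In,Out,Leak\subseteq V_G$; edge $j\to i$ carries label (parameter) $a_{ij}$ and each $i\in Leak$ carries $a_{0i}$. The compartmental matrix $A$ has $A_{ii}=-\sum_{k:\,i\to k\in E_G}a_{ki}$ (minus $a_{0i}$ if $i\in Leak$), $A_{ij}=a_{ij}$ if $j\to i\in E_G$, $0$ otherwise. $B^{r,q}$ denotes $B$ with row $r$ and column $q$ removed. The leak-augmented graph $\widetilde G$ is obtained from $G$ by adding a node $0$ and, for each $j\in Leak$, an edge $j\to0$ labeled $a_{0j}$; $\widetilde G^*_q$ is obtained from $\widetilde G$ by removing all edges outgoing from $q$. A spanning incoming forest of a graph is a spanning subgraph whose underlying undirected graph has no cycles and in which each node has at most one outgoing edge. $\mathcal F_j^{k,\ell}(H)$ is the set of spanning incoming forests of $H$ with exactly $j$ edges in which some connected component contains both $k$ and $\ell$. $\pi_F$ is the product of the edge labels of $F$ ($1$ if there are no edges). 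*)

theory Defs
  imports "Jordan_Normal_Form.Char_Poly"
begin

text \<open>Compartments are 1..n, node 0 is the leak node of the leak-augmented graph.
  A directed edge j -> i is the pair (j, i); its label is the parameter a i j
  (so a leak edge j -> 0 carries a 0 j).  Parameters take values in an arbitrary
  commutative ring, which subsumes treating them as indeterminates.\<close>

definition comp_entry ::
  "nat set \<Rightarrow> (nat \<times> nat) set \<Rightarrow> nat set \<Rightarrow> (nat \<Rightarrow> nat \<Rightarrow> 'a::comm_ring_1) \<Rightarrow> nat \<Rightarrow> nat \<Rightarrow> 'a" where
  "comp_entry V E Leak a i j =
     (if i = j then - (\<Sum>k\<in>{k. (i, k) \<in> E}. a k i) - (if i \<in> Leak then a 0 i else 0)
      else if (j, i) \<in> E then a i j else 0)"

text \<open>The n x n compartmental matrix; matrix index i (0-based) is compartment i+1.\<close>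
definition comp_matrix ::
  "nat \<Rightarrow> (nat \<times> nat) set \<Rightarrow> nat set \<Rightarrow> (nat \<Rightarrow> nat \<Rightarrow> 'a::comm_ring_1) \<Rightarrow> 'a mat" where
  "comp_matrix n E Leak a = mat n n (\<lambda>(i, j). comp_entry {1..n} E Leak a (i + 1) (j + 1))"

definition is_lcm :: "nat \<Rightarrow> (nat \<times> nat) set \<Rightarrow> nat set \<Rightarrow> nat set \<Rightarrow> nat set \<Rightarrow> bool" where
  "is_lcm n E In Out Leak \<longleftrightarrow>
     E \<subseteq> {1..n} \<times> {1..n} \<and> (\<forall>(j, i)\<in>E. j \<noteq> i) \<and>
     In \<subseteq> {1..n} \<and> Out \<subseteq> {1..n} \<and> Leak \<subseteq> {1..n}"

definition leak_aug_edges :: "(nat \<times> nat) set \<Rightarrow> nat set \<Rightarrow> (nat \<times> nat) set" where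
  "leak_aug_edges E Leak = E \<union> {(j, 0) | j. j \<in> Leak}"

definition remove_out :: "(nat \<times> nat) set \<Rightarrow> nat \<Rightarrow> (nat \<times> nat) set" where
  "remove_out E q = {(u, v) \<in> E. u \<noteq> q}"

definition has_undirected_cycle :: "('v \<times> 'v) set \<Rightarrow> bool" where
  "has_undirected_cycle F \<longleftrightarrow>
     (\<exists>vs es. length vs = length es \<and> es \<noteq> [] \<and> distinct vs \<and> distinct es \<and>
        (\<forall>i < length es. es ! i \<in> F \<and>
           (es ! i = (vs ! i, vs ! ((i + 1) mod length es)) \<or>
            es ! i = (vs ! ((i + 1) mod length es), vs ! i))))"

definition spanning_incoming_forest :: "('v \<times> 'v) set \<Rightarrow> ('v \<times> 'v) set \<Rightarrow> bool" where
  "spanning_incoming_forest EH F \<longleftrightarrow>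
     F \<subseteq> EH \<and> \<not> has_undirected_cycle F \<and>
     (\<forall>u v w. (u, v) \<in> F \<longrightarrow> (u, w) \<in> F \<longrightarrow> v = w)"

definition same_component :: "('v \<times> 'v) set \<Rightarrow> 'v \<Rightarrow> 'v \<Rightarrow> bool" where
  "same_component F k l \<longleftrightarrow> (k, l) \<in> (F \<union> F\<inverse>)\<^sup>*"

definition forests_kl :: "nat \<Rightarrow> 'v \<Rightarrow> 'v \<Rightarrow> ('v \<times> 'v) set \<Rightarrow> ('v \<times> 'v) set set" where
  "forests_kl j k l EH =
     {F. spanning_incoming_forest EH F \<and> card F = j \<and> same_component F k l}"

definition edge_label_prod :: "(nat \<Rightarrow> nat \<Rightarrow> 'a::comm_ring_1) \<Rightarrow> (nat \<times> nat) set \<Rightarrow> 'a" where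
  "edge_label_prod a F = (\<Prod>(u, v)\<in>F. a v u)"

end

theory Submission
  imports Defs
begin

lemma det_potential_triangular:
  fixes A :: "'a::comm_ring_1 mat"
  assumes A: "A \<in> carrier_mat n n"
    and h: "\<And>i j. i<n \<Longrightarrow> j<n \<Longrightarrow> i \<noteq> j \<Longrightarrow> A $$ (i,j) \<noteq> 0 \<Longrightarrow> h i < (h j::nat)"
  shows "det A = (\<Prod> i = 0..<n. A $$ (i,i))"
proof -
  let ?S = "{p. p permutes {0..<n}}"
  let ?g = "\<lambda>p. signof p * (\<Prod> i = 0..<n. A $$ (i, p i))"
  have z: "?g p = 0" if p: "p \<in> ?S - {id}" for p
  proof -
    have pp: "p permutes {0..<n}" and pid: "p \<noteq> id" using p by auto
    have "\<exists>i\<in>{0..<n}. A $$ (i, p i) = 0"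
    proof (rule ccontr)
      assume "\<not> ?thesis"
      hence nz: "\<And>i. i < n \<Longrightarrow> A $$ (i, p i) \<noteq> 0" by auto
      have le: "h i \<le> h (p i)" if "i \<in> {0..<n}" for i
      proof (cases "p i = i")
        case False
        thus ?thesis using h[of i "p i"] nz[of i] that permutes_in_image[OF pp] by fastforce
      qed simp
      obtain i where i: "p i \<noteq> i" using pid by (metis eq_id_iff)
      have "i \<in> {0..<n}" using i pp by (meson permutes_not_in)
      hence lt: "h i < h (p i)" using h[of i "p i"] nz[of i] i permutes_in_image[OF pp] by fastforce
      have "(\<Sum>i\<in>{0..<n}. h i) < (\<Sum>i\<in>{0..<n}. h (p i))"
        by (rule sum_strict_mono_ex1) (use le lt \<open>i \<in> {0..<n}\<close> in auto)
      moreover have "(\<Sum>i\<in>{0..<n}. h (p i)) = (\<Sum>i\<in>{0..<n}. h i)"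
        using sum.permute[OF pp, of h] by (simp add: comp_def)
      ultimately show False by simp
    qed
    hence "(\<Prod> i = 0..<n. A $$ (i, p i)) = 0" by (meson finite_atLeastLessThan prod_zero)
    thus ?thesis by simp
  qed
  have idS: "id \<in> ?S" by (simp add: permutes_id)
  have "det A = sum ?g ?S" using det_def'[OF A] by simp
  also have "\<dots> = ?g id + sum ?g (?S - {id})"
    by (rule sum.remove[OF _ idS]) (simp add: finite_permutations)
  also have "sum ?g (?S - {id}) = 0" using z by (meson sum.neutral)
  finally show ?thesis by (simp add: sign_id)
qed


definition funct :: "(nat \<times> nat) set \<Rightarrow> bool" where
  "funct F \<longleftrightarrow> (\<forall>u v w. (u,v)\<in>F \<longrightarrow> (u,w)\<in>F \<longrightarrow> v = w)"

definition sF :: "(nat \<times> nat) set \<Rightarrow> nat \<Rightarrow> nat" where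
  "sF F x = (THE y. (x,y) \<in> F)"

lemma sF_eq: "funct F \<Longrightarrow> (x,y) \<in> F \<Longrightarrow> sF F x = y"
  unfolding sF_def funct_def by blast

definition Nmat :: "nat \<Rightarrow> (nat \<times> nat) set \<Rightarrow> int mat" where
  "Nmat n F = mat n n (\<lambda>(i,j). (if i = j then 1 else 0) - (if (j+1, i+1) \<in> F then 1 else 0))"

lemma pot_lt:
  assumes "finite F" "(u,v) \<in> F" "(v,v) \<notin> F\<^sup>+"
  shows "card (F\<^sup>+ `` {v}) < card (F\<^sup>+ `` {u})"
proof (rule psubset_card_mono)
  show "finite (F\<^sup>+ `` {u})" using assms(1) by (simp add: finite_Image)
  have "F\<^sup>+ `` {v} \<subseteq> F\<^sup>+ `` {u}" using assms(2) by (auto intro: trancl_into_trancl2)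
  moreover have "v \<in> F\<^sup>+ `` {u}" using assms(2) by auto
  ultimately show "F\<^sup>+ `` {v} \<subset> F\<^sup>+ `` {u}" using assms(3) by auto
qed

lemma det_Nmat_acyclic:
  assumes F: "F \<subseteq> {1..n} \<times> {0..n}" and acyc: "\<forall>x. (x,x) \<notin> F\<^sup>+"
  shows "det (Nmat n F) = 1"
proof -
  have fin: "finite F" using F finite_subset by blast
  have car: "Nmat n F \<in> carrier_mat n n" by (simp add: Nmat_def)
  have "det (Nmat n F) = (\<Prod> i = 0..<n. Nmat n F $$ (i,i))"
  proof (rule det_potential_triangular[OF car, where h = "\<lambda>i. card (F\<^sup>+ `` {i+1})"])
    fix i j assume ij: "i < n" "j < n" "i \<noteq> j" "Nmat n F $$ (i, j) \<noteq> 0"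
    hence "(j+1, i+1) \<in> F" by (auto simp: Nmat_def split: if_splits)
    thus "card (F\<^sup>+ `` {i+1}) < card (F\<^sup>+ `` {j+1})" using pot_lt[OF fin] acyc by blast
  qed
  also have "\<dots> = 1"
  proof (rule prod.neutral, rule ballI)
    fix i assume "i \<in> {0..<n}"
    moreover have "(i+1,i+1) \<notin> F" using acyc by auto
    ultimately show "Nmat n F $$ (i,i) = 1" by (simp add: Nmat_def)
  qed
  finally show ?thesis .
qed

lemma det_Nmat_cyclic:
  assumes F: "F \<subseteq> {1..n} \<times> {0..n}" and fu: "funct F" and cyc: "(x,x) \<in> F\<^sup>+"
  shows "det (Nmat n F) = 0"
proof -
  define C where "C = {y. (y,y) \<in> F\<^sup>+}"
  let ?s = "sF F"
  have fin: "finite F" using F finite_subset by blast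
  have CF: "y \<in> C \<Longrightarrow> (y, ?s y) \<in> F \<and> ?s y \<in> C" for y
  proof -
    assume "y \<in> C"
    then obtain z where yz: "(y,z) \<in> F" "(z,y) \<in> F\<^sup>*" unfolding C_def by (auto dest: tranclD)
    have "?s y = z" using sF_eq[OF fu yz(1)] .
    moreover have "(z,z) \<in> F\<^sup>+" using yz by (meson rtrancl_into_trancl1)
    ultimately show ?thesis using yz unfolding C_def by auto
  qed
  have Csub: "C \<subseteq> {1..n}"
  proof
    fix y assume "y \<in> C" thus "y \<in> {1..n}" using CF[of y] F by auto
  qed
  have finC: "finite C" using Csub finite_subset by blast
  have surj: "C \<subseteq> ?s ` C"
  proof
    fix y assume "y \<in> C"
    then obtain z where yz: "(y,z) \<in> F\<^sup>*" "(z,y) \<in> F" unfolding C_def by (auto dest: tranclD2)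
    have "(z,z) \<in> F\<^sup>+" using yz by (meson rtrancl_into_trancl2)
    hence "z \<in> C" unfolding C_def by simp
    moreover have "?s z = y" using sF_eq[OF fu yz(2)] .
    ultimately show "y \<in> ?s ` C" by blast
  qed
  have inj: "inj_on ?s C" by (rule finite_surj_inj[OF finC surj])
  have xC: "x \<in> C" using cyc unfolding C_def by simp
  define v where "v = vec n (\<lambda>i. if i+1 \<in> C then 1 else (0::int))"
  have car: "Nmat n F \<in> carrier_mat n n" by (simp add: Nmat_def)
  have vc: "v \<in> carrier_vec n" unfolding v_def by simp
  have vnz: "v \<noteq> 0\<^sub>v n"
  proof
    assume v0: "v = 0\<^sub>v n"
    have "x \<in> {1..n}" using xC Csub by blast
    hence xn: "x - 1 < n" "x - 1 + 1 = x" by auto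
    have "v $ (x - 1) = 1" using xn xC unfolding v_def by simp
    moreover have "v $ (x - 1) = 0" using xn v0 by simp
    ultimately show False by simp
  qed
  have kern: "Nmat n F *\<^sub>v v = 0\<^sub>v n"
  proof (rule eq_vecI)
    show "dim_vec (Nmat n F *\<^sub>v v) = dim_vec (0\<^sub>v n)" by (simp add: Nmat_def)
    fix i assume "i < dim_vec (0\<^sub>v n)"
    hence i: "i < n" by simp
    have "(Nmat n F *\<^sub>v v) $ i = (\<Sum>j\<in>{0..<n}. ((if i = j then 1 else 0) - (if (j+1, i+1) \<in> F then 1 else 0)) * (if j+1 \<in> C then 1 else (0::int)))"
      using i by (simp add: Nmat_def v_def scalar_prod_def)
    also have "\<dots> = (\<Sum>j\<in>{0..<n}. (if i = j then (if j+1 \<in> C then 1 else 0) else 0)) - (\<Sum>j\<in>{0..<n}. (if (j+1, i+1) \<in> F \<and> j+1 \<in> C then 1 else (0::int)))"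
      unfolding sum_subtractf[symmetric] by (rule sum.cong) auto
    also have "(\<Sum>j\<in>{0..<n}. (if i = j then (if j+1 \<in> C then 1 else 0) else (0::int))) = (if i+1 \<in> C then 1 else 0)"
      using i by (simp add: sum.delta)
    also have "(\<Sum>j\<in>{0..<n}. (if (j+1, i+1) \<in> F \<and> j+1 \<in> C then 1 else (0::int))) = (if i+1 \<in> C then 1 else 0)"
    proof (cases "i+1 \<in> C")
      case True
      have "i+1 \<in> ?s ` C" using surj True by (rule subsetD)
      then obtain y where y': "i+1 = ?s y" "y \<in> C" by (rule imageE)
      have y: "y \<in> C" "?s y = i+1" using y' by simp_all
      have "y \<in> {1..n}" using Csub y(1) by (rule subsetD)
      hence y1: "1 \<le> y" "y \<le> n" by simp_all
      have yn: "y - 1 < n" "y - 1 + 1 = y" using y1 by linarith+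
      have "(\<Sum>j\<in>{0..<n}. (if (j+1, i+1) \<in> F \<and> j+1 \<in> C then 1 else (0::int))) =
            (\<Sum>j\<in>{0..<n}. (if j = y - 1 then 1 else 0))"
      proof (rule sum.cong[OF refl])
        fix j assume j: "j \<in> {0..<n}"
        have iff: "((j+1, i+1) \<in> F \<and> j+1 \<in> C) \<longleftrightarrow> j = y - 1"
        proof
          assume a: "(j+1, i+1) \<in> F \<and> j+1 \<in> C"
          have "?s (j+1) = i+1" using sF_eq[OF fu] a by blast
          hence "?s (j+1) = ?s y" using y(2) by simp
          hence "j + 1 = y" using inj_onD[OF inj _ _ y(1)] a by blast
          thus "j = y - 1" by simp
        next
          assume jy: "j = y - 1"
          have yF: "(y, i+1) \<in> F" using CF[OF y(1)] y(2) by simp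
          have "j + 1 = y" using jy yn(2) by simp
          thus "(j+1, i+1) \<in> F \<and> j+1 \<in> C" using yF y(1) by simp
        qed
        show "(if (j+1, i+1) \<in> F \<and> j+1 \<in> C then 1 else (0::int)) = (if j = y - 1 then 1 else 0)" by (rule if_cong[OF iff]) simp_all
      qed
      also have "\<dots> = 1" using yn(1) by (simp add: sum.delta')
      finally have "(\<Sum>j\<in>{0..<n}. (if (j+1, i+1) \<in> F \<and> j+1 \<in> C then 1 else (0::int))) = 1" .
      thus ?thesis using True by simp
    next
      case False
      have nz: "\<not> ((j+1, i+1) \<in> F \<and> j+1 \<in> C)" for j
      proof
        assume a0: "(j+1, i+1) \<in> F \<and> j+1 \<in> C"
        hence a: "(j+1, i+1) \<in> F" "j+1 \<in> C" by simp_all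
        have "?s (j+1) = i+1" using sF_eq[OF fu a(1)] .
        thus False using CF[OF a(2)] False by simp
      qed
      have "\<forall>j\<in>{0..<n}. (if (j+1, i+1) \<in> F \<and> j+1 \<in> C then 1 else (0::int)) = 0" using nz by simp
      hence "(\<Sum>j\<in>{0..<n}. (if (j+1, i+1) \<in> F \<and> j+1 \<in> C then 1 else (0::int))) = 0" by (rule sum.neutral)
      thus ?thesis using False by simp
    qed
    finally show "(Nmat n F *\<^sub>v v) $ i = 0\<^sub>v n $ i" using i by simp
  qed
  show ?thesis using det_0_iff_vec_prod_zero[OF car] vc vnz kern by blast
qed


definition Pmat :: "nat \<Rightarrow> nat \<Rightarrow> nat \<Rightarrow> (nat \<times> nat) set \<Rightarrow> int mat" where
  "Pmat n q r F = mat n n (\<lambda>(i,j). if j+1 = q then (if i+1 = r then 1 else 0)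
     else (if i = j then 1 else 0) - (if (j+1, i+1) \<in> F then 1 else 0))"

lemma mat_delete_col_eq:
  assumes A: "A \<in> carrier_mat n n" and B: "B \<in> carrier_mat n n"
    and eq: "\<And>i j. i < n \<Longrightarrow> j < n \<Longrightarrow> j \<noteq> c \<Longrightarrow> A $$ (i,j) = B $$ (i,j)"
  shows "mat_delete A i c = mat_delete B i c"
proof (rule eq_matI)
  show "dim_row (mat_delete A i c) = dim_row (mat_delete B i c)" using A B by simp
  show "dim_col (mat_delete A i c) = dim_col (mat_delete B i c)" using A B by simp
  fix i' j' assume ij: "i' < dim_row (mat_delete B i c)" "j' < dim_col (mat_delete B i c)"
  hence "i' < n - 1" "j' < n - 1" using B by auto
  thus "mat_delete A i c $$ (i', j') = mat_delete B i c $$ (i', j')"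
    unfolding mat_delete_def using A B by (auto intro!: eq)
qed

lemma det_col_linear:
  fixes A B D :: "'a::comm_ring_1 mat"
  assumes A: "A \<in> carrier_mat n n" and B: "B \<in> carrier_mat n n" and D: "D \<in> carrier_mat n n"
    and c: "c < n"
    and eqB: "\<And>i j. i < n \<Longrightarrow> j < n \<Longrightarrow> j \<noteq> c \<Longrightarrow> A $$ (i,j) = B $$ (i,j)"
    and eqD: "\<And>i j. i < n \<Longrightarrow> j < n \<Longrightarrow> j \<noteq> c \<Longrightarrow> A $$ (i,j) = D $$ (i,j)"
    and col: "\<And>i. i < n \<Longrightarrow> A $$ (i,c) = B $$ (i,c) - D $$ (i,c)"
  shows "det A = det B - det D"
proof -
  have cB: "cofactor A i c = cofactor B i c" for i
  proof -
    have "mat_delete A i c = mat_delete B i c" by (rule mat_delete_col_eq[OF A B], rule eqB)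
    thus ?thesis unfolding cofactor_def by simp
  qed
  have cD: "cofactor A i c = cofactor D i c" for i
  proof -
    have "mat_delete A i c = mat_delete D i c" by (rule mat_delete_col_eq[OF A D], rule eqD)
    thus ?thesis unfolding cofactor_def by simp
  qed
  have "det A = (\<Sum>i<n. A $$ (i,c) * cofactor A i c)" by (rule laplace_expansion_column[OF A c])
  also have "\<dots> = (\<Sum>i<n. B $$ (i,c) * cofactor B i c - D $$ (i,c) * cofactor D i c)"
    by (rule sum.cong[OF refl]) (simp add: col cB[symmetric] cD[symmetric] left_diff_distrib)
  also have "\<dots> = det B - det D"
    by (simp add: sum_subtractf laplace_expansion_column[OF B c] laplace_expansion_column[OF D c])
  finally show ?thesis .
qed

lemma det_Pmat:
  assumes F: "F \<subseteq> {1..n} \<times> {0..n}" and fu: "funct F" and q: "q \<in> {1..n}" and r: "r \<in> {1..n}"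
    and qout: "\<And>x. (q,x) \<notin> F"
  shows "det (Pmat n q r F) = (if (\<forall>x. (x,x) \<notin> F\<^sup>+) \<and> (r,q) \<in> F\<^sup>* then 1 else 0)"
proof -
  define F' where "F' = insert (q,r) F"
  have F'sub: "F' \<subseteq> {1..n} \<times> {0..n}" using F q r unfolding F'_def by auto
  have fu': "funct F'" using fu qout unfolding F'_def funct_def by blast
  have lin: "det (Pmat n q r F) = det (Nmat n F) - det (Nmat n F')"
  proof (rule det_col_linear[where c = "q - 1"])
    show "Pmat n q r F \<in> carrier_mat n n" "Nmat n F \<in> carrier_mat n n" "Nmat n F' \<in> carrier_mat n n"
      by (simp_all add: Pmat_def Nmat_def)
    show "q - 1 < n" using q by auto
    fix i j assume ij: "i < n" "j < n"
    {
      assume "j \<noteq> q - 1"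
      hence jq: "j + 1 \<noteq> q" using q by auto
      show "Pmat n q r F $$ (i,j) = Nmat n F $$ (i,j)" using ij jq by (simp add: Pmat_def Nmat_def)
      show "Pmat n q r F $$ (i,j) = Nmat n F' $$ (i,j)" using ij jq by (simp add: Pmat_def Nmat_def F'_def)
    }
  next
    fix i assume i: "i < n"
    have qq: "q - 1 + 1 = q" using q by auto
    show "Pmat n q r F $$ (i, q - 1) = Nmat n F $$ (i, q - 1) - Nmat n F' $$ (i, q - 1)"
      using i q qq qout by (simp add: Pmat_def Nmat_def F'_def)
  qed
  show ?thesis
  proof (cases "\<forall>x. (x,x) \<notin> F\<^sup>+")
    case False
    then obtain x where x: "(x,x) \<in> F\<^sup>+" by blast
    have x': "(x,x) \<in> F'\<^sup>+" using x trancl_mono[of _ F F'] unfolding F'_def by blast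
    show ?thesis using lin det_Nmat_cyclic[OF F fu x] det_Nmat_cyclic[OF F'sub fu' x'] False by simp
  next
    case acyc: True
    have d1: "det (Nmat n F) = 1" by (rule det_Nmat_acyclic[OF F acyc])
    show ?thesis
    proof (cases "(r,q) \<in> F\<^sup>*")
      case True
      have "(q,q) \<in> F'\<^sup>+" unfolding F'_def trancl_insert using True by blast
      thus ?thesis using lin d1 det_Nmat_cyclic[OF F'sub fu'] acyc True by simp
    next
      case False
      have "\<forall>x. (x,x) \<notin> F'\<^sup>+"
      proof (intro allI notI)
        fix x assume "(x,x) \<in> F'\<^sup>+"
        hence "(x,x) \<in> F\<^sup>+ \<or> ((x,q) \<in> F\<^sup>* \<and> (r,x) \<in> F\<^sup>*)" unfolding F'_def trancl_insert by blast
        thus False using acyc False by (meson rtrancl_trans)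
      qed
      hence "det (Nmat n F') = 1" by (rule det_Nmat_acyclic[OF F'sub])
      thus ?thesis using lin d1 False by simp
    qed
  qed
qed


lemma no_ucycle:
  assumes fin: "finite F" and fu: "funct F" and acyc: "\<forall>x. (x,x) \<notin> F\<^sup>+"
  shows "\<not> has_undirected_cycle F"
proof
  assume "has_undirected_cycle F"
  then obtain vs es where len: "length vs = length es" and ne: "es \<noteq> []" and dvs: "distinct vs"
    and des: "distinct es"
    and H: "\<forall>i < length es. es ! i \<in> F \<and>
           (es ! i = (vs ! i, vs ! ((i + 1) mod length es)) \<or>
            es ! i = (vs ! ((i + 1) mod length es), vs ! i))"
    unfolding has_undirected_cycle_def by blast
  define m where "m = length es"
  have m0: "0 < m" using ne unfolding m_def by simp
  define h where "h x = card (F\<^sup>+ `` {x})" for x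
  have hlt: "(u,v) \<in> F \<Longrightarrow> h v < h u" for u v
    unfolding h_def using pot_lt[OF fin] acyc by blast
  define M where "M = Max ((\<lambda>i. h (vs ! i)) ` {..<m})"
  have "M \<in> (\<lambda>i. h (vs ! i)) ` {..<m}" unfolding M_def using m0 by (intro Max_in) auto
  then obtain t where t: "t < m" "h (vs ! t) = M" by auto
  have tmax: "i < m \<Longrightarrow> h (vs ! i) \<le> h (vs ! t)" for i
    unfolding t(2) M_def by (intro Max_ge) auto
  define t' where "t' = (t + m - 1) mod m"
  have t'm: "t' < m" unfolding t'_def using m0 by simp
  have t't: "(t' + 1) mod m = t"
  proof -
    have "(t' + 1) mod m = (t + m - 1 + 1) mod m" unfolding t'_def by (simp add: mod_Suc_eq)
    also have "t + m - 1 + 1 = t + m" using m0 by simp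
    finally show ?thesis using t(1) by simp
  qed
  have t1m: "(t + 1) mod m < m" using m0 by simp
  have Ht: "es ! t \<in> F \<and> (es ! t = (vs ! t, vs ! ((t + 1) mod m)) \<or> es ! t = (vs ! ((t + 1) mod m), vs ! t))"
    using H t(1) unfolding m_def by blast
  have Ht': "es ! t' \<in> F \<and> (es ! t' = (vs ! t', vs ! t) \<or> es ! t' = (vs ! t, vs ! t'))"
    using H t'm t't unfolding m_def by metis
  have e1: "es ! t = (vs ! t, vs ! ((t + 1) mod m))"
  proof (rule ccontr)
    assume "es ! t \<noteq> (vs ! t, vs ! ((t + 1) mod m))"
    hence "(vs ! ((t + 1) mod m), vs ! t) \<in> F" using Ht by metis
    hence "h (vs ! t) < h (vs ! ((t + 1) mod m))" by (rule hlt)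
    thus False using tmax[OF t1m] by simp
  qed
  have e2: "es ! t' = (vs ! t, vs ! t')"
  proof (rule ccontr)
    assume "es ! t' \<noteq> (vs ! t, vs ! t')"
    hence "(vs ! t', vs ! t) \<in> F" using Ht' by metis
    hence "h (vs ! t) < h (vs ! t')" by (rule hlt)
    thus False using tmax[OF t'm] by simp
  qed
  have "vs ! t' = vs ! ((t + 1) mod m)"
    using fu Ht Ht' e1 e2 unfolding funct_def by metis
  hence "es ! t = es ! t'" using e1 e2 by simp
  hence "t = t'" using des t(1) t'm nth_eq_iff_index_eq unfolding m_def by blast
  hence "(vs ! t, vs ! t) \<in> F" using Ht' e2 by simp
  hence "h (vs ! t) < h (vs ! t)" by (rule hlt)
  thus False by simp
qed

lemma relpow_funct:
  assumes fu: "funct F"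
  shows "(x,y) \<in> F ^^ m \<Longrightarrow> y = (sF F ^^ m) x \<and> (\<forall>i<m. ((sF F ^^ i) x, (sF F ^^ Suc i) x) \<in> F)"
proof (induction m arbitrary: y)
  case 0
  thus ?case by simp
next
  case (Suc m)
  from Suc.prems obtain z where xz: "(x,z) \<in> F ^^ m" and zy: "(z,y) \<in> F" by (meson relpow_Suc_E)
  from Suc.IH[OF xz] have z: "z = (sF F ^^ m) x" and P: "\<forall>i<m. ((sF F ^^ i) x, (sF F ^^ Suc i) x) \<in> F" by auto
  have y: "y = sF F z" using sF_eq[OF fu zy] by simp
  have "y = (sF F ^^ Suc m) x" using y z by simp
  moreover have "\<forall>i<Suc m. ((sF F ^^ i) x, (sF F ^^ Suc i) x) \<in> F"
  proof (intro allI impI)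
    fix i assume "i < Suc m"
    show "((sF F ^^ i) x, (sF F ^^ Suc i) x) \<in> F"
    proof (cases "i < m")
      case True thus ?thesis using P by blast
    next
      case False
      hence "i = m" using \<open>i < Suc m\<close> by simp
      thus ?thesis using zy y z by simp
    qed
  qed
  ultimately show ?case by blast
qed

lemma funpow_relpow:
  assumes "\<forall>i<m. ((s ^^ i) x, (s ^^ Suc i) x) \<in> F"
  shows "j \<le> m \<Longrightarrow> (x, (s ^^ j) x) \<in> F ^^ j"
proof (induction j)
  case 0 thus ?case by simp
next
  case (Suc j)
  hence "(x, (s ^^ j) x) \<in> F ^^ j" by simp
  moreover have "((s ^^ j) x, (s ^^ Suc j) x) \<in> F" using assms Suc.prems by simp
  ultimately show ?case by (rule relpow_Suc_I)
qed

lemma cycle_ucycle: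
  assumes fu: "funct F" and cyc: "(x,x) \<in> F\<^sup>+"
  shows "has_undirected_cycle F"
proof -
  let ?s = "sF F"
  define P where "P m \<longleftrightarrow> 0 < m \<and> (x,x) \<in> F ^^ m" for m
  have ex: "\<exists>m. P m" using cyc unfolding P_def trancl_power by blast
  define m where "m = (LEAST m. P m)"
  have Pm: "P m" unfolding m_def using ex by (meson LeastI_ex)
  have minm: "\<And>k. P k \<Longrightarrow> m \<le> k" unfolding m_def by (rule Least_le)
  have m0: "0 < m" and xx: "(x,x) \<in> F ^^ m" using Pm unfolding P_def by auto
  from relpow_funct[OF fu xx] have xm: "(?s ^^ m) x = x"
    and edges: "\<forall>i<m. ((?s ^^ i) x, (?s ^^ Suc i) x) \<in> F" by auto
  have inj: "inj_on (\<lambda>i. (?s ^^ i) x) {0..<m}"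
  proof (rule inj_onI, rule ccontr)
    fix a b assume a: "a \<in> {0..<m}" and b: "b \<in> {0..<m}" and eq: "(?s ^^ a) x = (?s ^^ b) x" and ne: "a \<noteq> b"
    have key: "a < b \<Longrightarrow> a \<in> {0..<m} \<Longrightarrow> b \<in> {0..<m} \<Longrightarrow> (?s ^^ a) x = (?s ^^ b) x \<Longrightarrow> False" for a b
    proof -
      assume ab: "a < b" and a: "a \<in> {0..<m}" and b: "b \<in> {0..<m}" and eq: "(?s ^^ a) x = (?s ^^ b) x"
      define k where "k = (m - b) + a"
      have "(?s ^^ k) x = (?s ^^ (m - b)) ((?s ^^ a) x)" unfolding k_def by (simp add: funpow_add)
      also have "\<dots> = (?s ^^ (m - b)) ((?s ^^ b) x)" using eq by simp
      also have "\<dots> = (?s ^^ (m - b + b)) x" by (simp add: funpow_add)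
      also have "m - b + b = m" using b by simp
      finally have sk: "(?s ^^ k) x = x" using xm by simp
      have k: "0 < k" "k < m" "k \<le> m" using ab b unfolding k_def by auto
      have "(x, (?s ^^ k) x) \<in> F ^^ k" using funpow_relpow[OF edges k(3)] .
      hence "P k" using sk k unfolding P_def by simp
      thus False using minm k by fastforce
    qed
    show False
    proof (cases "a < b")
      case True thus ?thesis using key a b eq by blast
    next
      case False hence "b < a" using ne by simp
      thus ?thesis using key a b eq by metis
    qed
  qed
  define vs where "vs = map (\<lambda>i. (?s ^^ i) x) [0..<m]"
  define es where "es = map (\<lambda>i. ((?s ^^ i) x, (?s ^^ Suc i) x)) [0..<m]"
  have len: "length vs = length es" "length es = m" unfolding vs_def es_def by simp_all
  have dvs: "distinct vs" unfolding vs_def using inj by (simp add: distinct_map)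
  have inj2: "inj_on (\<lambda>i. ((?s ^^ i) x, (?s ^^ Suc i) x)) {0..<m}"
    using inj unfolding inj_on_def by blast
  have des: "distinct es" unfolding es_def using inj2 by (simp add: distinct_map)
  have ne: "es \<noteq> []" using len m0 by auto
  have H: "\<forall>i < length es. es ! i \<in> F \<and>
           (es ! i = (vs ! i, vs ! ((i + 1) mod length es)) \<or>
            es ! i = (vs ! ((i + 1) mod length es), vs ! i))"
  proof (intro allI impI)
    fix i assume "i < length es"
    hence i: "i < m" using len by simp
    have ei: "es ! i = ((?s ^^ i) x, (?s ^^ Suc i) x)" unfolding es_def using i by simp
    have vi: "vs ! i = (?s ^^ i) x" unfolding vs_def using i by simp
    have vi1: "vs ! ((i + 1) mod m) = (?s ^^ Suc i) x"
    proof (cases "i + 1 < m")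
      case True thus ?thesis unfolding vs_def by simp
    next
      case False hence "i + 1 = m" using i by simp
      thus ?thesis unfolding vs_def using m0 xm by simp
    qed
    show "es ! i \<in> F \<and> (es ! i = (vs ! i, vs ! ((i + 1) mod length es)) \<or>
            es ! i = (vs ! ((i + 1) mod length es), vs ! i))"
      using ei vi vi1 edges i len(2) by simp
  qed
  show ?thesis unfolding has_undirected_cycle_def using len(1) ne dvs des H by blast
qed

lemma same_comp_reach:
  assumes fu: "funct F" and qout: "\<And>x. (q,x) \<notin> F" and sc: "(r,q) \<in> (F \<union> F\<inverse>)\<^sup>*"
  shows "(r,q) \<in> F\<^sup>*"
  using sc
proof (induction rule: converse_rtrancl_induct)
  case base thus ?case by simp
next
  case (step y z)
  from step.hyps(1) show ?case
  proof
    assume "(y,z) \<in> F"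
    thus ?thesis using step.IH by (rule converse_rtrancl_into_rtrancl)
  next
    assume "(y,z) \<in> F\<inverse>"
    hence zy: "(z,y) \<in> F" by simp
    hence "z \<noteq> q" using qout by blast
    then obtain w where zw: "(z,w) \<in> F" and wq: "(w,q) \<in> F\<^sup>*" using step.IH
      by (meson converse_rtranclE)
    have "w = y" using fu zw zy unfolding funct_def by blast
    thus ?thesis using wq by simp
  qed
qed


lemma det_expand_cols:
  fixes W :: "nat \<Rightarrow> 'b \<Rightarrow> 'a::comm_ring_1" and V :: "nat \<Rightarrow> 'b \<Rightarrow> nat \<Rightarrow> 'a"
  assumes fin: "\<And>j. j < n \<Longrightarrow> finite (T j)"
  shows "det (mat n n (\<lambda>(i,j). \<Sum>t\<in>T j. W j t * V j t i)) =
    (\<Sum>f\<in>PiE {0..<n} T. (\<Prod>j\<in>{0..<n}. W j (f j)) * det (mat n n (\<lambda>(i,j). V j (f j) i)))"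
proof -
  let ?M = "mat n n (\<lambda>(i,j). \<Sum>t\<in>T j. W j t * V j t i)"
  let ?S = "{p. p permutes {0..<n}}"
  have tr: "det X = (\<Sum>p\<in>?S. signof p * (\<Prod>i = 0..<n. X $$ (p i, i)))" if X: "X \<in> carrier_mat n n" for X :: "'a mat"
  proof -
    have "det X = det (transpose_mat X)" using det_transpose[OF X] by simp
    also have "\<dots> = (\<Sum>p\<in>?S. signof p * (\<Prod>i = 0..<n. transpose_mat X $$ (i, p i)))"
      by (rule det_def') (use X in simp)
    also have "\<dots> = (\<Sum>p\<in>?S. signof p * (\<Prod>i = 0..<n. X $$ (p i, i)))"
    proof (rule sum.cong[OF refl])
      fix p assume p: "p \<in> ?S"
      have "(\<Prod>i = 0..<n. transpose_mat X $$ (i, p i)) = (\<Prod>i = 0..<n. X $$ (p i, i))"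
      proof (rule prod.cong[OF refl])
        fix i assume i: "i \<in> {0..<n}"
        hence "p i < n" using p permutes_in_image by fastforce
        thus "transpose_mat X $$ (i, p i) = X $$ (p i, i)" using i X by simp
      qed
      thus "signof p * (\<Prod>i = 0..<n. transpose_mat X $$ (i, p i)) = signof p * (\<Prod>i = 0..<n. X $$ (p i, i))" by simp
    qed
    finally show ?thesis .
  qed
  have "det ?M = (\<Sum>p\<in>?S. signof p * (\<Prod>i = 0..<n. ?M $$ (p i, i)))" by (rule tr) simp
  also have "\<dots> = (\<Sum>p\<in>?S. signof p * (\<Sum>f\<in>PiE {0..<n} T. (\<Prod>j\<in>{0..<n}. W j (f j)) * (\<Prod>i = 0..<n. V i (f i) (p i))))"
  proof (rule sum.cong[OF refl])
    fix p assume p: "p \<in> ?S"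
    have pi: "i \<in> {0..<n} \<Longrightarrow> p i < n" for i using p permutes_in_image by fastforce
    have "(\<Prod>i = 0..<n. ?M $$ (p i, i)) = (\<Prod>i = 0..<n. \<Sum>t\<in>T i. W i t * V i t (p i))"
      by (rule prod.cong[OF refl]) (use pi in simp)
    also have "\<dots> = (\<Sum>f\<in>PiE {0..<n} T. \<Prod>i = 0..<n. W i (f i) * V i (f i) (p i))"
      by (rule prod_sum_PiE) (use fin in auto)
    also have "\<dots> = (\<Sum>f\<in>PiE {0..<n} T. (\<Prod>j\<in>{0..<n}. W j (f j)) * (\<Prod>i = 0..<n. V i (f i) (p i)))"
      by (simp add: prod.distrib)
    finally show "signof p * (\<Prod>i = 0..<n. ?M $$ (p i, i)) = signof p * (\<Sum>f\<in>PiE {0..<n} T. (\<Prod>j\<in>{0..<n}. W j (f j)) * (\<Prod>i = 0..<n. V i (f i) (p i)))" by simp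
  qed
  also have "\<dots> = (\<Sum>f\<in>PiE {0..<n} T. (\<Prod>j\<in>{0..<n}. W j (f j)) * (\<Sum>p\<in>?S. signof p * (\<Prod>i = 0..<n. V i (f i) (p i))))"
    by (simp add: sum_distrib_left mult.left_commute) (rule sum.swap)
  also have "\<dots> = (\<Sum>f\<in>PiE {0..<n} T. (\<Prod>j\<in>{0..<n}. W j (f j)) * det (mat n n (\<lambda>(i,j). V j (f j) i)))"
  proof (rule sum.cong[OF refl])
    fix f
    have "det (mat n n (\<lambda>(i,j). V j (f j) i)) = (\<Sum>p\<in>?S. signof p * (\<Prod>i = 0..<n. mat n n (\<lambda>(i,j). V j (f j) i) $$ (p i, i)))"
      by (rule tr) simp
    also have "\<dots> = (\<Sum>p\<in>?S. signof p * (\<Prod>i = 0..<n. V i (f i) (p i)))"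
    proof (rule sum.cong[OF refl])
      fix p assume p: "p \<in> ?S"
      have pi: "i \<in> {0..<n} \<Longrightarrow> p i < n" for i using p permutes_in_image by fastforce
      show "signof p * (\<Prod>i = 0..<n. mat n n (\<lambda>(i,j). V j (f j) i) $$ (p i, i)) = signof p * (\<Prod>i = 0..<n. V i (f i) (p i))"
        by (rule arg_cong[where f = "\<lambda>x. signof p * x"], rule prod.cong[OF refl]) (use pi in simp)
    qed
    finally show "(\<Prod>j\<in>{0..<n}. W j (f j)) * (\<Sum>p\<in>?S. signof p * (\<Prod>i = 0..<n. V i (f i) (p i))) =
       (\<Prod>j\<in>{0..<n}. W j (f j)) * det (mat n n (\<lambda>(i,j). V j (f j) i))" by simp
  qed
  finally show ?thesis .
qed

lemma prod_monom: "finite A \<Longrightarrow> (\<Prod>j\<in>A. monom (c j) (d j)) = monom (\<Prod>j\<in>A. c j) (\<Sum>j\<in>A. d j)"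
  by (induction A rule: finite_induct) (auto simp: mult_monom)

lemma const_poly_sum: "(\<Sum>t\<in>A. [:f t:]) = [:\<Sum>t\<in>A. f t:]"
  by (induction A rule: infinite_finite_induct) auto



definition T_set :: "nat \<Rightarrow> (nat \<times> nat) set \<Rightarrow> nat \<Rightarrow> nat option set" where
  "T_set q EH j = (if j = q - 1 then {None} else insert None (Some ` {t. (j+1, t) \<in> EH}))"

definition edges_of :: "nat \<Rightarrow> (nat \<Rightarrow> nat option) \<Rightarrow> (nat \<times> nat) set" where
  "edges_of n f = {(j+1, t) | j t. j < n \<and> f j = Some t}"

definition dW :: "nat \<Rightarrow> nat \<Rightarrow> nat option \<Rightarrow> nat" where
  "dW q j t = (case t of None \<Rightarrow> (if j = q - 1 then 0 else 1) | Some _ \<Rightarrow> 0)"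

definition cW :: "(nat \<Rightarrow> nat \<Rightarrow> 'a::comm_ring_1) \<Rightarrow> nat \<Rightarrow> nat option \<Rightarrow> 'a" where
  "cW a j t = (case t of None \<Rightarrow> 1 | Some s \<Rightarrow> a s (j+1))"

lemma edges_of_iff: "(u,v) \<in> edges_of n f \<longleftrightarrow> 1 \<le> u \<and> u \<le> n \<and> f (u - 1) = Some v"
  unfolding edges_of_def by (cases u) auto

lemma card_filter_sum: "finite A \<Longrightarrow> card {x\<in>A. P x} = (\<Sum>x\<in>A. if P x then 1 else 0)"
  by (simp add: sum.inter_filter[symmetric])

locale setting =
  fixes n q :: nat and EH :: "(nat \<times> nat) set"
  assumes EHsub: "EH \<subseteq> {1..n} \<times> {0..n}" and q: "q \<in> {1..n}"
begin

abbreviation "Fs \<equiv> PiE {0..<n} (T_set q EH)"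

lemma Fs_q: "f \<in> Fs \<Longrightarrow> f (q - 1) = None"
proof -
  assume f: "f \<in> Fs"
  have "q - 1 \<in> {0..<n}" using q by auto
  hence "f (q - 1) \<in> T_set q EH (q - 1)" using f by (auto simp: PiE_iff)
  thus ?thesis unfolding T_set_def by simp
qed

lemma Fs_some: "f \<in> Fs \<Longrightarrow> j < n \<Longrightarrow> f j = Some t \<Longrightarrow> j \<noteq> q - 1 \<and> (j+1, t) \<in> EH"
proof -
  assume f: "f \<in> Fs" and j: "j < n" and t: "f j = Some t"
  have "f j \<in> T_set q EH j" using f j by (auto simp: PiE_iff)
  thus ?thesis using t unfolding T_set_def by (auto split: if_splits)
qed

lemma edges_sub: "f \<in> Fs \<Longrightarrow> edges_of n f \<subseteq> remove_out EH q"
proof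
  fix e assume f: "f \<in> Fs" and e: "e \<in> edges_of n f"
  then obtain j t where e': "e = (j+1,t)" "j < n" "f j = Some t" unfolding edges_of_def by blast
  from Fs_some[OF f e'(2,3)] have "j \<noteq> q - 1" "(j+1,t) \<in> EH" by auto
  moreover have "j + 1 \<noteq> q" using \<open>j \<noteq> q - 1\<close> by auto
  ultimately show "e \<in> remove_out EH q" unfolding remove_out_def e'(1) by simp
qed

lemma edges_sub2: "f \<in> Fs \<Longrightarrow> edges_of n f \<subseteq> {1..n} \<times> {0..n}"
  using edges_sub EHsub unfolding remove_out_def by blast

lemma edges_funct: "funct (edges_of n f)"
  unfolding funct_def edges_of_iff by auto

lemma edges_qout: "f \<in> Fs \<Longrightarrow> (q, x) \<notin> edges_of n f"
proof
  assume f: "f \<in> Fs" and "(q, x) \<in> edges_of n f"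
  hence "f (q - 1) = Some x" unfolding edges_of_iff by simp
  thus False using Fs_q[OF f] by simp
qed

lemma edges_finite: "finite (edges_of n f)"
proof -
  have "edges_of n f \<subseteq> (\<lambda>j. (j+1, the (f j))) ` {0..<n}" unfolding edges_of_def by force
  thus ?thesis by (rule finite_subset) simp
qed

lemma edges_card: assumes f: "f \<in> Fs"
  shows "card (edges_of n f) + (\<Sum>j\<in>{0..<n}. dW q j (f j)) + 1 = n"
proof -
  let ?D = "{j\<in>{0..<n}. f j \<noteq> None}"
  have img: "edges_of n f = (\<lambda>j. (j+1, the (f j))) ` ?D" unfolding edges_of_def by force
  have inj: "inj_on (\<lambda>j. (j+1, the (f j))) ?D" by (rule inj_onI) simp
  have c1: "card (edges_of n f) = (\<Sum>j\<in>{0..<n}. if f j \<noteq> None then 1 else 0)"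
    unfolding img card_image[OF inj] by (rule card_filter_sum) simp
  have qn: "q - 1 < n" using q by auto
  have pw: "(if f j \<noteq> None then 1 else 0) + dW q j (f j) + (if j = q - 1 then 1 else 0) = (1::nat)"
    if "j \<in> {0..<n}" for j
    using Fs_q[OF f] by (cases "f j") (auto simp: dW_def)
  have "(\<Sum>j\<in>{0..<n}. (if f j \<noteq> None then 1 else 0) + dW q j (f j) + (if j = q - 1 then 1 else 0)) = (\<Sum>j\<in>{0..<n}. (1::nat))"
    using pw by (rule sum.cong[OF refl])
  hence "(\<Sum>j\<in>{0..<n}. if f j \<noteq> None then 1 else 0) + (\<Sum>j\<in>{0..<n}. dW q j (f j)) + (\<Sum>j\<in>{0..<n}. if j = q - 1 then 1 else (0::nat)) = n"
    by (simp add: sum.distrib)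
  moreover have "(\<Sum>j\<in>{0..<n}. if j = q - 1 then 1 else (0::nat)) = 1" using qn by (simp add: sum.delta')
  ultimately show ?thesis using c1 by simp
qed

lemma edges_wt: assumes f: "f \<in> Fs"
  shows "(\<Prod>j\<in>{0..<n}. cW a j (f j)) = edge_label_prod a (edges_of n f)"
proof -
  let ?D = "{j\<in>{0..<n}. f j \<noteq> None}"
  have img: "edges_of n f = (\<lambda>j. (j+1, the (f j))) ` ?D" unfolding edges_of_def by force
  have inj: "inj_on (\<lambda>j. (j+1, the (f j))) ?D" by (rule inj_onI) simp
  have "edge_label_prod a (edges_of n f) = (\<Prod>j\<in>?D. a (the (f j)) (j+1))"
    unfolding edge_label_prod_def img prod.reindex[OF inj] by simp
  also have "\<dots> = (\<Prod>j\<in>{0..<n}. if f j \<noteq> None then a (the (f j)) (j+1) else 1)"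
    by (rule prod.inter_filter) simp
  also have "\<dots> = (\<Prod>j\<in>{0..<n}. cW a j (f j))"
    by (rule prod.cong[OF refl]) (auto simp: cW_def split: option.splits)
  finally show ?thesis by simp
qed

lemma edges_inj: "inj_on (edges_of n) Fs"
proof (rule inj_onI)
  fix f g assume f: "f \<in> Fs" and g: "g \<in> Fs" and eq: "edges_of n f = edges_of n g"
  show "f = g"
  proof (rule PiE_ext[OF f g])
    fix j assume j: "j \<in> {0..<n}"
    have e: "(j+1, t) \<in> edges_of n h \<longleftrightarrow> h j = Some t" for h t using j by (simp add: edges_of_iff)
    have iff: "f j = Some t \<longleftrightarrow> g j = Some t" for t
      using e[where h=f and t=t] e[where h=g and t=t] eq by simp
    show "f j = g j"
    proof (cases "f j")
      case None
      thus ?thesis using iff by (cases "g j") auto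
    next
      case (Some t) thus ?thesis using iff by simp
    qed
  qed
qed

end


context setting
begin

lemma bij_forests:
  assumes k: "k < n" and r: "r \<in> {1..n}"
  shows "bij_betw (edges_of n)
    {f \<in> Fs. (\<Sum>j\<in>{0..<n}. dW q j (f j)) = k \<and> (\<forall>x. (x,x) \<notin> (edges_of n f)\<^sup>+) \<and> (r,q) \<in> (edges_of n f)\<^sup>*}
    (forests_kl (n-k-1) r q (remove_out EH q))"
proof (rule bij_betw_imageI)
  show "inj_on (edges_of n) {f \<in> Fs. (\<Sum>j\<in>{0..<n}. dW q j (f j)) = k \<and> (\<forall>x. (x,x) \<notin> (edges_of n f)\<^sup>+) \<and> (r,q) \<in> (edges_of n f)\<^sup>*}"
    by (rule inj_on_subset[OF edges_inj]) blast
  show "edges_of n ` {f \<in> Fs. (\<Sum>j\<in>{0..<n}. dW q j (f j)) = k \<and> (\<forall>x. (x,x) \<notin> (edges_of n f)\<^sup>+) \<and> (r,q) \<in> (edges_of n f)\<^sup>*}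
    = forests_kl (n-k-1) r q (remove_out EH q)"
  proof (intro equalityI subsetI)
    fix F assume "F \<in> edges_of n ` {f \<in> Fs. (\<Sum>j\<in>{0..<n}. dW q j (f j)) = k \<and> (\<forall>x. (x,x) \<notin> (edges_of n f)\<^sup>+) \<and> (r,q) \<in> (edges_of n f)\<^sup>*}"
    then obtain f where f: "f \<in> Fs" and deg: "(\<Sum>j\<in>{0..<n}. dW q j (f j)) = k"
      and acyc: "\<forall>x. (x,x) \<notin> (edges_of n f)\<^sup>+" and good: "(r,q) \<in> (edges_of n f)\<^sup>*"
      and F: "F = edges_of n f" by blast
    have sif: "spanning_incoming_forest (remove_out EH q) F"
      unfolding spanning_incoming_forest_def F
      using edges_sub[OF f] no_ucycle[OF edges_finite edges_funct acyc] edges_funct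
      unfolding funct_def by blast
    have "card F = n - k - 1" using edges_card[OF f] deg F by simp
    moreover have "same_component F r q" unfolding same_component_def F
      using good rtrancl_mono[of "edges_of n f" "edges_of n f \<union> (edges_of n f)\<inverse>"] by blast
    ultimately show "F \<in> forests_kl (n-k-1) r q (remove_out EH q)"
      unfolding forests_kl_def using sif by blast
  next
    fix F assume "F \<in> forests_kl (n-k-1) r q (remove_out EH q)"
    hence sif: "spanning_incoming_forest (remove_out EH q) F" and cF: "card F = n - k - 1"
      and sc: "same_component F r q" unfolding forests_kl_def by auto
    have Fsub: "F \<subseteq> remove_out EH q" and nocyc: "\<not> has_undirected_cycle F"
      and fuF: "funct F" using sif unfolding spanning_incoming_forest_def funct_def by auto
    have qout: "(q, x) \<notin> F" for x using Fsub unfolding remove_out_def by auto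
    have FEH: "F \<subseteq> EH" using Fsub unfolding remove_out_def by auto
    define f where "f = (\<lambda>j. if j < n then (if \<exists>t. (j+1,t) \<in> F then Some (sF F (j+1)) else None) else undefined)"
    have fS: "f j = Some t \<longleftrightarrow> j < n \<and> (j+1, t) \<in> F" if jn: "j < n" for j t
    proof
      assume "f j = Some t"
      then obtain t' where "(j+1,t') \<in> F" "t = sF F (j+1)" using jn unfolding f_def by (auto split: if_splits)
      thus "j < n \<and> (j+1, t) \<in> F" using sF_eq[OF fuF] jn by auto
    next
      assume "j < n \<and> (j+1, t) \<in> F"
      thus "f j = Some t" unfolding f_def using sF_eq[OF fuF] by auto
    qed
    have fFs: "f \<in> Fs"
      unfolding PiE_iff
    proof (intro conjI ballI)
      show "f \<in> extensional {0..<n}" unfolding f_def extensional_def by auto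
      fix j assume j: "j \<in> {0..<n}"
      show "f j \<in> T_set q EH j"
      proof (cases "f j")
        case None thus ?thesis unfolding T_set_def by simp
      next
        case (Some t)
        hence jt: "(j+1, t) \<in> F" using fS j by auto
        hence "j + 1 \<noteq> q" using qout by blast
        hence "j \<noteq> q - 1" using q by auto
        thus ?thesis using jt FEH Some unfolding T_set_def by auto
      qed
    qed
    have eF: "edges_of n f = F"
    proof (intro equalityI subsetI)
      fix e assume "e \<in> edges_of n f"
      then obtain u v where e: "e = (u,v)" "1 \<le> u" "u \<le> n" "f (u - 1) = Some v"
        unfolding edges_of_iff by (metis edges_of_iff surj_pair)
      hence "(u - 1 + 1, v) \<in> F" using fS[of "u - 1" v] by auto
      thus "e \<in> F" using e by simp
    next
      fix e assume eF: "e \<in> F"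
      then obtain u v where e: "e = (u,v)" by (cases e)
      have "u \<in> {1..n}" using eF e FEH EHsub by blast
      hence u: "1 \<le> u" "u \<le> n" "u - 1 < n" "u - 1 + 1 = u" by auto
      have "f (u - 1) = Some v" using fS[OF u(3), of v] eF e u(3,4) by simp
      thus "e \<in> edges_of n f" unfolding e edges_of_iff using u by simp
    qed
    have acyc: "\<forall>x. (x,x) \<notin> F\<^sup>+" using cycle_ucycle[OF fuF] nocyc by blast
    have good: "(r,q) \<in> F\<^sup>*"
      by (rule same_comp_reach[OF fuF qout]) (use sc in \<open>simp add: same_component_def\<close>)
    have "card F + (\<Sum>j\<in>{0..<n}. dW q j (f j)) + 1 = n" using edges_card[OF fFs] eF by simp
    hence deg: "(\<Sum>j\<in>{0..<n}. dW q j (f j)) = k" using cF k by simp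
    show "F \<in> edges_of n ` {f \<in> Fs. (\<Sum>j\<in>{0..<n}. dW q j (f j)) = k \<and> (\<forall>x. (x,x) \<notin> (edges_of n f)\<^sup>+) \<and> (r,q) \<in> (edges_of n f)\<^sup>*}"
      using fFs deg acyc good eF by (intro image_eqI[of _ _ f]) auto
  qed
qed

end

definition Vi :: "nat \<Rightarrow> nat \<Rightarrow> nat \<Rightarrow> nat option \<Rightarrow> nat \<Rightarrow> int" where
  "Vi q r j t i = (case t of None \<Rightarrow> (if j = q - 1 then (if i = r - 1 then 1 else 0) else (if i = j then 1 else 0))
     | Some s \<Rightarrow> (if i = j then 1 else 0) - (if s = i + 1 then 1 else 0))"

lemma key_entry:
  assumes lcm: "is_lcm n E In Out Leak" and i: "i < n" and j: "j < n"
  shows "(\<Sum>t\<in>{t. (j+1,t) \<in> leak_aug_edges E Leak}. a t (j+1) * of_int ((if i = j then 1 else 0) - (if t = i+1 then 1 else 0)))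
     = - comp_entry {1..n} E Leak a (i+1) (j+1)"
proof -
  have Esub: "E \<subseteq> {1..n} \<times> {1..n}" and noloop: "\<And>u. (u,u) \<notin> E"
    using lcm unfolding is_lcm_def by auto
  define OE where "OE = {t. (j+1,t) \<in> E}"
  define OL where "OL = {t::nat. t = 0 \<and> j+1 \<in> Leak}"
  have O: "{t. (j+1,t) \<in> leak_aug_edges E Leak} = OE \<union> OL"
    unfolding OE_def OL_def leak_aug_edges_def by auto
  have finOE: "finite OE" unfolding OE_def
    by (rule finite_subset[of _ "{1..n}"]) (use Esub in auto)
  have finOL: "finite OL" unfolding OL_def by (rule finite_subset[of _ "{0}"]) auto
  have disj: "OE \<inter> OL = {}" unfolding OE_def OL_def using Esub by auto
  have sOL: "(\<Sum>t\<in>OL. g t) = (if j+1 \<in> Leak then g 0 else 0)" for g :: "nat \<Rightarrow> 'a"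
  proof (cases "j+1 \<in> Leak")
    case True hence "OL = {0}" unfolding OL_def by auto
    thus ?thesis using True by simp
  next
    case False hence "OL = {}" unfolding OL_def by auto
    thus ?thesis using False by simp
  qed
  show ?thesis
  proof (cases "i = j")
    case True
    have "(\<Sum>t\<in>OE \<union> OL. a t (j+1) * of_int ((if i = j then 1 else 0) - (if t = i+1 then 1 else 0)))
        = (\<Sum>t\<in>OE \<union> OL. a t (j+1))"
    proof (rule sum.cong[OF refl])
      fix t assume t: "t \<in> OE \<union> OL"
      have "t \<noteq> j + 1" using t noloop unfolding OE_def OL_def by auto
      thus "a t (j+1) * of_int ((if i = j then 1 else 0) - (if t = i+1 then 1 else 0)) = a t (j+1)"
        using True by simp
    qed
    also have "\<dots> = (\<Sum>t\<in>OE. a t (j+1)) + (\<Sum>t\<in>OL. a t (j+1))"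
      by (rule sum.union_disjoint[OF finOE finOL disj])
    also have "\<dots> = - comp_entry {1..n} E Leak a (i+1) (j+1)"
      unfolding comp_entry_def sOL OE_def using True by simp
    finally show ?thesis unfolding O .
  next
    case False
    have "(\<Sum>t\<in>OE \<union> OL. a t (j+1) * of_int ((if i = j then 1 else 0) - (if t = i+1 then 1 else 0)))
        = - (\<Sum>t\<in>OE \<union> OL. if t = i+1 then a t (j+1) else 0)"
      unfolding sum_negf[symmetric] by (rule sum.cong[OF refl]) (use False in simp)
    also have "(\<Sum>t\<in>OE \<union> OL. if t = i+1 then a t (j+1) else 0) = (if i+1 \<in> OE \<union> OL then a (i+1) (j+1) else 0)"
      using finOE finOL by (simp add: sum.delta)
    also have "(i+1 \<in> OE \<union> OL) \<longleftrightarrow> (j+1, i+1) \<in> E" unfolding OE_def OL_def by auto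
    finally show ?thesis unfolding O comp_entry_def using False by simp
  qed
qed



lemma L_entry:
  assumes lcm: "is_lcm n E In Out Leak" and i: "i < n" and j: "j < n" and jq: "j \<noteq> q - 1"
  shows "char_poly_matrix (comp_matrix n E Leak a) $$ (i,j) =
    (\<Sum>t\<in>T_set q (leak_aug_edges E Leak) j. monom (cW a j t) (dW q j t) * of_int (Vi q r j t i))"
proof -
  define Os where "Os = {t. (j+1,t) \<in> leak_aug_edges E Leak}"
  have Esub: "E \<subseteq> {1..n} \<times> {1..n}" and Lsub: "Leak \<subseteq> {1..n}" using lcm unfolding is_lcm_def by auto
  have finOs: "finite Os" unfolding Os_def leak_aug_edges_def
    by (rule finite_subset[of _ "{0..n}"]) (use Esub in auto)
  have T: "T_set q (leak_aug_edges E Leak) j = insert None (Some ` Os)"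
    unfolding T_set_def Os_def using jq by simp
  have "(\<Sum>t\<in>T_set q (leak_aug_edges E Leak) j. monom (cW a j t) (dW q j t) * of_int (Vi q r j t i))
     = monom 1 1 * of_int (if i = j then 1 else 0) +
       (\<Sum>t\<in>Os. monom (a t (j+1)) 0 * of_int ((if i = j then 1 else 0) - (if t = i+1 then 1 else 0)))"
    unfolding T using finOs jq by (simp add: sum.reindex cW_def dW_def Vi_def)
  also have "(\<Sum>t\<in>Os. monom (a t (j+1)) 0 * of_int ((if i = j then 1 else 0) - (if t = i+1 then 1 else 0)))
     = (\<Sum>t\<in>Os. [: a t (j+1) * of_int ((if i = j then 1 else 0) - (if t = i+1 then 1 else 0)) :])"
    by (rule sum.cong[OF refl]) (simp add: monom_0 of_int_poly)
  also have "\<dots> = [: - comp_entry {1..n} E Leak a (i+1) (j+1) :]"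
    unfolding const_poly_sum Os_def key_entry[OF lcm i j] ..
  also have "monom 1 1 * of_int (if i = j then 1 else 0) = (if i = j then [:0,1:] else (0 :: 'a poly))"
    by (simp add: monom_Suc monom_0)
  finally show ?thesis
    using i j by (simp add: char_poly_matrix_def comp_matrix_def)
qed

lemma coeff_monom_const: "coeff (monom c d * of_int z) k = (if d = k then c * of_int z else 0)"
  by (simp add: of_int_poly coeff_monom_mult coeff_pCons split: nat.split)

theorem proposition3p12:
  fixes n :: nat and E :: "(nat \<times> nat) set" and In Out Leak :: "nat set"
    and a :: "nat \<Rightarrow> nat \<Rightarrow> 'a::comm_ring_1" and q r k :: nat
  assumes "is_lcm n E In Out Leak"
    and "q \<in> {1..n}" and "r \<in> {1..n}"
    and "k < n"
  shows "coeff (det (mat_delete (char_poly_matrix (comp_matrix n E Leak a)) (r - 1) (q - 1))) k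
       = (-1) ^ (q + r) *
         (\<Sum>F\<in>forests_kl (n - k - 1) r q (remove_out (leak_aug_edges E Leak) q). edge_label_prod a F)"
proof -
  note lcm = assms(1) and q = assms(2) and r = assms(3) and k = assms(4)
  have Esub: "E \<subseteq> {1..n} \<times> {1..n}" and Lsub: "Leak \<subseteq> {1..n}" using lcm unfolding is_lcm_def by auto
  define EH where "EH = leak_aug_edges E Leak"
  have EHsub: "EH \<subseteq> {1..n} \<times> {0..n}" unfolding EH_def leak_aug_edges_def using Esub Lsub by auto
  interpret setting n q EH using EHsub q by unfold_locales
  define L where "L = char_poly_matrix (comp_matrix n E Leak a)"
  have Lc: "L \<in> carrier_mat n n" unfolding L_def comp_matrix_def by simp
  have qn: "q - 1 < n" and rn: "r - 1 < n" using q r by auto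
  define B where "B = mat n n (\<lambda>(i,j). if j = q - 1 then (if i = r - 1 then 1 else 0) else L $$ (i,j))"
  have Bc: "B \<in> carrier_mat n n" unfolding B_def by simp
  have dB: "det B = (-1) ^ (r - 1 + (q - 1)) * det (mat_delete L (r - 1) (q - 1))"
  proof -
    have "det B = (\<Sum>i<n. B $$ (i, q - 1) * cofactor B i (q - 1))"
      by (rule laplace_expansion_column[OF Bc qn])
    also have "\<dots> = (\<Sum>i<n. if i = r - 1 then cofactor B i (q - 1) else 0)"
    proof (rule sum.cong[OF refl])
      fix i assume "i \<in> {..<n}"
      hence "B $$ (i, q - 1) = (if i = r - 1 then 1 else 0)" unfolding B_def using qn by simp
      thus "B $$ (i, q - 1) * cofactor B i (q - 1) = (if i = r - 1 then cofactor B i (q - 1) else 0)" by simp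
    qed
    also have "\<dots> = cofactor B (r - 1) (q - 1)" using rn by simp
    finally have dc: "det B = cofactor B (r - 1) (q - 1)" .
    have md: "mat_delete B (r - 1) (q - 1) = mat_delete L (r - 1) (q - 1)"
      by (rule mat_delete_col_eq[OF Bc Lc]) (simp add: B_def)
    show ?thesis using dc md unfolding cofactor_def by simp
  qed
  have BW: "B = mat n n (\<lambda>(i,j). \<Sum>t\<in>T_set q EH j. monom (cW a j t) (dW q j t) * of_int (Vi q r j t i))"
  proof (rule eq_matI)
    fix i j assume ij: "i < dim_row (mat n n (\<lambda>(i,j). \<Sum>t\<in>T_set q EH j. monom (cW a j t) (dW q j t) * of_int (Vi q r j t i)))"
      "j < dim_col (mat n n (\<lambda>(i,j). \<Sum>t\<in>T_set q EH j. monom (cW a j t) (dW q j t) * of_int (Vi q r j t i)))"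
    hence i: "i < n" and j: "j < n" by auto
    show "B $$ (i,j) = mat n n (\<lambda>(i,j). \<Sum>t\<in>T_set q EH j. monom (cW a j t) (dW q j t) * of_int (Vi q r j t i)) $$ (i,j)"
    proof (cases "j = q - 1")
      case True
      thus ?thesis using i j by (simp add: B_def T_set_def cW_def dW_def Vi_def)
    next
      case False
      thus ?thesis using i j L_entry[OF lcm i j False, of a r] by (simp add: B_def L_def EH_def)
    qed
  qed (auto simp: B_def)
  have finT: "finite (T_set q EH j)" for j
  proof -
    have "{t. (j+1,t) \<in> EH} \<subseteq> {0..n}" using EHsub by auto
    hence "finite {t. (j+1,t) \<in> EH}" by (rule finite_subset) simp
    thus ?thesis unfolding T_set_def by simp
  qed
  have exp: "det B = (\<Sum>f\<in>Fs. (\<Prod>j\<in>{0..<n}. monom (cW a j (f j)) (dW q j (f j))) *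
        det (mat n n (\<lambda>(i,j). of_int (Vi q r j (f j) i))))"
    unfolding BW by (rule det_expand_cols) (rule finT)
  define good where "good f \<longleftrightarrow> (\<forall>x. (x,x) \<notin> (edges_of n f)\<^sup>+) \<and> (r,q) \<in> (edges_of n f)\<^sup>*" for f
  have summand: "(\<Prod>j\<in>{0..<n}. monom (cW a j (f j)) (dW q j (f j))) *
        det (mat n n (\<lambda>(i,j). of_int (Vi q r j (f j) i)))
      = monom (\<Prod>j\<in>{0..<n}. cW a j (f j)) (\<Sum>j\<in>{0..<n}. dW q j (f j)) * of_int (if good f then 1 else 0)"
    if f: "f \<in> Fs" for f
  proof -
    have M: "(mat n n (\<lambda>(i,j). of_int (Vi q r j (f j) i)) :: 'a poly mat) = map_mat of_int (Pmat n q r (edges_of n f))"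
    proof (rule eq_matI)
      fix i j assume "i < dim_row (map_mat of_int (Pmat n q r (edges_of n f)) :: 'a poly mat)"
        "j < dim_col (map_mat of_int (Pmat n q r (edges_of n f)) :: 'a poly mat)"
      hence i: "i < n" and j: "j < n" by (auto simp: Pmat_def)
      have ed: "(j+1, i+1) \<in> edges_of n f \<longleftrightarrow> f j = Some (i+1)" using j by (simp add: edges_of_iff)
      have "Vi q r j (f j) i = Pmat n q r (edges_of n f) $$ (i,j)"
      proof (cases "j = q - 1")
        case True
        hence "j + 1 = q" "f j = None" using q Fs_q[OF f] by auto
        moreover have "(i = r - 1) \<longleftrightarrow> (i + 1 = r)" using r by auto
        ultimately show ?thesis using True i j by (simp add: Vi_def Pmat_def)
      next
        case False
        hence jq: "j + 1 \<noteq> q" using q by auto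
        show ?thesis
        proof (cases "f j")
          case None
          thus ?thesis using False jq i j ed by (simp add: Vi_def Pmat_def)
        next
          case (Some s)
          thus ?thesis using False jq i j ed by (simp add: Vi_def Pmat_def)
        qed
      qed
      thus "(mat n n (\<lambda>(i,j). of_int (Vi q r j (f j) i)) :: 'a poly mat) $$ (i,j) = map_mat of_int (Pmat n q r (edges_of n f)) $$ (i,j)"
        using i j by (simp add: Pmat_def)
    qed (auto simp: Pmat_def)
    have "det (mat n n (\<lambda>(i,j). of_int (Vi q r j (f j) i)) :: 'a poly mat) = of_int (det (Pmat n q r (edges_of n f)))"
      unfolding M by (rule of_int_hom.hom_det)
    also have "det (Pmat n q r (edges_of n f)) = (if good f then 1 else 0)"
      unfolding good_def by (rule det_Pmat[OF edges_sub2[OF f] edges_funct q r edges_qout[OF f]])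
    finally show ?thesis by (simp add: prod_monom)
  qed
  define G where "G = {f \<in> Fs. (\<Sum>j\<in>{0..<n}. dW q j (f j)) = k \<and> (\<forall>x. (x,x) \<notin> (edges_of n f)\<^sup>+) \<and> (r,q) \<in> (edges_of n f)\<^sup>*}"
  have cB: "coeff (det B) k = (\<Sum>F\<in>forests_kl (n - k - 1) r q (remove_out EH q). edge_label_prod a F)"
  proof -
    have "coeff (det B) k = (\<Sum>f\<in>Fs. coeff (monom (\<Prod>j\<in>{0..<n}. cW a j (f j)) (\<Sum>j\<in>{0..<n}. dW q j (f j)) * of_int (if good f then 1 else 0)) k)"
      unfolding exp coeff_sum by (rule sum.cong[OF refl]) (simp add: summand)
    also have "\<dots> = (\<Sum>f\<in>Fs. if (\<Sum>j\<in>{0..<n}. dW q j (f j)) = k \<and> good f then (\<Prod>j\<in>{0..<n}. cW a j (f j)) else 0)"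
      by (rule sum.cong[OF refl]) (simp add: coeff_monom_const)
    also have "\<dots> = (\<Sum>f\<in>G. \<Prod>j\<in>{0..<n}. cW a j (f j))"
      unfolding G_def good_def by (rule sum.inter_filter[symmetric]) (simp add: finite_PiE finT)
    also have "\<dots> = (\<Sum>f\<in>G. edge_label_prod a (edges_of n f))"
      by (rule sum.cong[OF refl]) (simp add: G_def edges_wt)
    also have "\<dots> = (\<Sum>F\<in>forests_kl (n - k - 1) r q (remove_out EH q). edge_label_prod a F)"
      unfolding G_def by (rule sum.reindex_bij_betw[OF bij_forests[OF k r]])
    finally show ?thesis .
  qed
  have par: "even (r - 1 + (q - 1)) \<longleftrightarrow> even (q + r)" using q r by auto
  have "det (mat_delete L (r - 1) (q - 1)) = (-1) ^ (r - 1 + (q - 1)) * det B"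
    using dB by (simp add: minus_one_power_iff)
  hence "coeff (det (mat_delete L (r - 1) (q - 1))) k = (-1) ^ (q + r) * coeff (det B) k"
    using par by (simp add: minus_one_power_iff)
  thus ?thesis unfolding cB L_def EH_def .
qed


end
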